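(* Let $G=(V,E)$ be a $d$-regular graph on $n$ vertices with adjacency matrix $A$, and let $D = d\cdot I_n$. Let $\{\phi_1,\dots,\phi_n\}\subset\mathbb{R}^n$ be an orthonormal basis of eigenvectors of the symmetric matrix $AD^{-1}$, where $\phi_j$ has eigenvalue $\lambda_j$, the eigenvalues are ordered as $1=\lambda_1 \geq |\lambda_2| \geq \dots \geq |\lambda_n|\geq 0$, and $\phi_1 = \frac{1}{\sqrt n}(1,1,\dots,1)$. Then for every $2 \leq \ell \leq n-1$ there exists a vector $0 \neq w \in \mathbb{R}^n_{\geq 0}$ such that (1) $w$ has at most $\ell$ nonzero entries, and (2) $\langle \phi_j, w\rangle = 0$ for all $2 \leq j \leq \ell$.
   Context: $\langle\cdot,\cdot\rangle$ denotes the standard inner product on $\mathbb{R}^n$, and vectors in $\mathbb{R}^n$ are indexed by the vertices of $G$. *)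

theory Defs
  imports "HOL-Analysis.Analysis"
begin

definition simple_graph :: "('v \<Rightarrow> 'v \<Rightarrow> bool) \<Rightarrow> bool" where
  "simple_graph E \<longleftrightarrow> (\<forall>u v. E u v \<longleftrightarrow> E v u) \<and> (\<forall>v. \<not> E v v)"

definition regular_graph :: "('v \<Rightarrow> 'v \<Rightarrow> bool) \<Rightarrow> nat \<Rightarrow> bool" where
  "regular_graph E d \<longleftrightarrow> (\<forall>v. card {u. E v u} = d)"

definition adj_matrix :: "('v::finite \<Rightarrow> 'v \<Rightarrow> bool) \<Rightarrow> real^'v^'v" where
  "adj_matrix E = (\<chi> i j. if E i j then 1 else 0)"

end

theory Submission
  imports Defs
begin

theorem lemma2:
  fixes E :: "'v::finite \<Rightarrow> 'v \<Rightarrow> bool"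
    and d :: nat
    and phi :: "nat \<Rightarrow> real^'v"
    and lam :: "nat \<Rightarrow> real"
  assumes graph: "simple_graph E"
    and reg: "regular_graph E d"
    and dpos: "d \<ge> 1"
    and orth: "\<forall>i\<in>{1..CARD('v)}. \<forall>j\<in>{1..CARD('v)}. phi i \<bullet> phi j = (if i = j then 1 else 0)"
    and basis: "span (phi ` {1..CARD('v)}) = UNIV"
    and eig: "\<forall>j\<in>{1..CARD('v)}.
       (adj_matrix E ** matrix_inv (mat (real d) :: real^'v^'v)) *v phi j = scaleR (lam j) (phi j)"
    and lam1: "lam 1 = 1"
    and lam12: "CARD('v) \<ge> 2 \<longrightarrow> lam 1 \<ge> \<bar>lam 2\<bar>"
    and ordered: "\<forall>j\<in>{2..<CARD('v)}. \<bar>lam j\<bar> \<ge> \<bar>lam (j + 1)\<bar>"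
    and phi1: "phi 1 = (\<chi> i. 1 / sqrt (real CARD('v)))"
  shows "\<forall>l. 2 \<le> l \<and> l \<le> CARD('v) - 1 \<longrightarrow>
    (\<exists>w :: real^'v. w \<noteq> 0 \<and> (\<forall>i. w $ i \<ge> 0) \<and> card {i. w $ i \<noteq> 0} \<le> l \<and>
        (\<forall>j\<in>{2..l}. phi j \<bullet> w = 0))"
proof (intro allI impI)
  fix l assume l: "2 \<le> l \<and> l \<le> CARD('v) - 1"
  define n where "n = CARD('v)"
  have npos: "n > 0" unfolding n_def by simp
  define q where "q i = (\<Sum>j\<in>{2..l}. (phi j $ i) *\<^sub>R phi j)" for i :: 'v
  have rng: "j \<in> {2..l} \<Longrightarrow> j \<in> {1..CARD('v)}" for j using l by auto
  have sumphi: "(\<Sum>i\<in>UNIV. phi j $ i) = 0" if j: "j \<in> {2..l}" for j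
  proof -
    have "phi j \<bullet> phi 1 = 0" using orth rng[OF j] j by auto
    moreover have "phi j \<bullet> phi 1 = (\<Sum>i\<in>UNIV. phi j $ i) / sqrt (real n)"
      unfolding phi1 inner_vec_def n_def by (simp add: sum_divide_distrib)
    ultimately show ?thesis using npos by simp
  qed
  have sumq: "(\<Sum>i\<in>UNIV. q i) = 0"
    unfolding q_def by (subst sum.swap) (simp add: scaleR_sum_left[symmetric] sumphi)
  have qphi: "phi k \<bullet> q i = phi k $ i" if k: "k \<in> {2..l}" for k i
  proof -
    have "phi k \<bullet> q i = (\<Sum>j\<in>{2..l}. (phi j $ i) * (phi k \<bullet> phi j))"
      unfolding q_def by (simp add: inner_sum_right)
    also have "\<dots> = (\<Sum>j\<in>{2..l}. if j = k then phi k $ i else 0)"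
      by (rule sum.cong) (use orth rng k in auto)
    also have "\<dots> = phi k $ i" using k by simp
    finally show ?thesis .
  qed
  have "0 \<in> convex hull (range q)"
  proof -
    have "(\<Sum>i\<in>UNIV. (1 / real n) *\<^sub>R q i) \<in> convex hull (range q)"
      by (rule convex_sum) (auto simp: n_def hull_inc)
    then show ?thesis by (simp add: scaleR_sum_right[symmetric] sumq)
  qed
  then obtain S u where S: "finite S" "S \<subseteq> range q" "card S \<le> aff_dim (range q) + 1"
    "\<forall>x\<in>S. 0 \<le> u x" "sum u S = 1" "(\<Sum>v\<in>S. u v *\<^sub>R v) = 0"
    unfolding convex_hull_caratheodory_aff_dim by blast
  have "aff_dim (range q) \<le> aff_dim (span (phi ` {2..l}))"
    proof (rule aff_dim_subset, rule image_subsetI)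
    fix i show "q i \<in> span (phi ` {2..l})"
      unfolding q_def by (intro span_sum span_scale span_base imageI)
  qed
  also have "\<dots> = int (dim (phi ` {2..l}))"
    by (simp add: aff_dim_subspace)
  also have "\<dots> \<le> int (card (phi ` {2..l}))" by (simp add: dim_le_card')
  also have "\<dots> \<le> int (card {2..l})" using card_image_le[of "{2..l}" phi] by simp
  finally have cardS: "card S \<le> l" using S(3) l by auto
  define T where "T = inv q ` S"
  have qT: "x \<in> S \<Longrightarrow> q (inv q x) = x" for x using S(2) by (auto intro: f_inv_into_f)
  have injT: "inj_on q T" unfolding T_def using qT by (auto simp: inj_on_def)
  have qTS: "q ` T = S" unfolding T_def using qT by force
  have cardT: "card T \<le> l" unfolding T_def using cardS card_image_le[OF S(1), of "inv q"] by linarith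
  define w :: "real^'v" where "w = (\<chi> i. if i \<in> T then u (q i) else 0)"
  have sumT: "(\<Sum>i\<in>T. f (q i)) = (\<Sum>x\<in>S. f x)" for f :: "real^'v \<Rightarrow> 'b::comm_monoid_add"
    using sum.reindex[OF injT, of f] qTS by simp
  show "\<exists>w :: real^'v. w \<noteq> 0 \<and> (\<forall>i. w $ i \<ge> 0) \<and> card {i. w $ i \<noteq> 0} \<le> l \<and>
        (\<forall>j\<in>{2..l}. phi j \<bullet> w = 0)"
  proof (intro exI conjI allI ballI)
    show "w \<noteq> 0"
    proof
      assume "w = 0"
      then have "\<forall>i\<in>T. u (q i) = 0" unfolding w_def by (auto simp: vec_eq_iff split: if_splits)
      then have "(\<Sum>i\<in>T. u (q i)) = 0" by simp
      then show False using sumT[of u] S(5) by simp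
    qed
    show "0 \<le> w $ i" for i using S(4) qTS unfolding w_def by auto
    have "{i. w $ i \<noteq> 0} \<subseteq> T" unfolding w_def by auto
    then show "card {i. w $ i \<noteq> 0} \<le> l" using cardT card_mono[of T] by (meson finite order_trans)
    fix k assume k: "k \<in> {2..l}"
    have "phi k \<bullet> w = (\<Sum>i\<in>UNIV. phi k $ i * (if i \<in> T then u (q i) else 0))"
      unfolding inner_vec_def w_def by simp
    also have "\<dots> = (\<Sum>i\<in>T. u (q i) * (phi k \<bullet> q i))"
      by (simp add: qphi[OF k] if_distrib sum.If_cases Int_absorb1 mult.commute)
    also have "\<dots> = phi k \<bullet> (\<Sum>i\<in>T. u (q i) *\<^sub>R q i)"
      by (simp add: inner_sum_right)
    also have "\<dots> = phi k \<bullet> (\<Sum>x\<in>S. u x *\<^sub>R x)"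
      using sumT[of "\<lambda>x. u x *\<^sub>R x"] by simp
    also have "\<dots> = 0" using S(6) by simp
    finally show "phi k \<bullet> w = 0" .
  qed
qed

end
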